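(* For every elementary cellular automaton rule $\alpha\in\{0,\dots,255\}$, every $n\ge1$, every $\Delta,\Delta'\in\mathcal{P}_n$ and every $i\in\mathbb{Z}_n$: if $d^{\leftarrow}_\Delta(i)=d^{\leftarrow}_{\Delta'}(i)$ and $d^{\rightarrow}_\Delta(i)=d^{\rightarrow}_{\Delta'}(i)$, then $f^{(\Delta)}_{\alpha,n}(x)_i=f^{(\Delta')}_{\alpha,n}(x)_i$ for every $x\in\{0,1\}^n$.
   Context: Cells are indexed by $\mathbb{Z}_n=\{0,\dots,n-1\}$, indices modulo $n$. For a Wolfram number $\alpha$, $r_\alpha(x_1,x_2,x_3)$ is the bit of $\alpha$ of weight $2^{4x_1+2x_2+x_3}$, and $f_{\alpha,n}(x)_i=r_\alpha(x_{i-1},x_i,x_{i+1})$. An update schedule is an ordered partition $\Delta=(\Delta_1,\dots,\Delta_k)$ of $\mathbb{Z}_n$ into nonempty blocks; $\mathcal{P}_n$ is the set of them. For a block $B$ let $f^{(B)}(x)_i=f_{\alpha,n}(x)_i$ if $i\in B$ and $x_i$ otherwise; $f^{(\Delta)}_{\alpha,n}=f^{(\Delta_k)}\circ\cdots\circ f^{(\Delta_1)}$. For $u,v\in\mathbb{Z}_n$ with $u\in\Delta_a$, $v\in\Delta_b$, the label is $lab_\Delta((u,v))=\oplus$ if $b\le a$ and $lab_\Delta((u,v))=\ominus$ if $a<b$. Define $d^{\leftarrow}_\Delta(i)=\max\{k\in\mathbb{N}:\forall j\in\mathbb{N},\,0<j<k\Rightarrow lab_\Delta((i-j,i-j+1))=\ominus\}$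 and $d^{\rightarrow}_\Delta(i)=\max\{k\in\mathbb{N}:\forall j\in\mathbb{N},\,0<j<k\Rightarrow lab_\Delta((i+j,i+j-1))=\ominus\}$ (these maxima are finite). *)

theory Defs
  imports Main
begin

text \<open>Cells are the naturals 0..<n; index arithmetic is modulo n.
  Configurations are functions nat => bool (only cells 0..<n are relevant).\<close>

definition cmod :: "nat \<Rightarrow> int \<Rightarrow> nat" where
  "cmod n k = nat (k mod int n)"

definition rule :: "nat \<Rightarrow> bool \<Rightarrow> bool \<Rightarrow> bool \<Rightarrow> bool" where
  "rule \<alpha> x1 x2 x3 = bit \<alpha> (4 * of_bool x1 + 2 * of_bool x2 + of_bool x3)"

definition eca :: "nat \<Rightarrow> nat \<Rightarrow> (nat \<Rightarrow> bool) \<Rightarrow> (nat \<Rightarrow> bool)" where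
  "eca \<alpha> n x i = rule \<alpha> (x (cmod n (int i - 1))) (x i) (x (cmod n (int i + 1)))"

definition update_schedule :: "nat \<Rightarrow> nat set list \<Rightarrow> bool" where
  "update_schedule n \<Delta> \<longleftrightarrow>
     (\<forall>a < length \<Delta>. \<Delta> ! a \<noteq> {}) \<and>
     (\<forall>a < length \<Delta>. \<forall>b < length \<Delta>. a \<noteq> b \<longrightarrow> \<Delta> ! a \<inter> \<Delta> ! b = {}) \<and>
     \<Union> (set \<Delta>) = {0..<n}"

definition block_update :: "nat \<Rightarrow> nat \<Rightarrow> nat set \<Rightarrow> (nat \<Rightarrow> bool) \<Rightarrow> (nat \<Rightarrow> bool)" where
  "block_update \<alpha> n B x i = (if i \<in> B then eca \<alpha> n x i else x i)"

text \<open>f^(Delta) = f^(Delta_k) o ... o f^(Delta_1): Delta_1 is applied first.\<close>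
definition async_eca :: "nat \<Rightarrow> nat \<Rightarrow> nat set list \<Rightarrow> (nat \<Rightarrow> bool) \<Rightarrow> (nat \<Rightarrow> bool)" where
  "async_eca \<alpha> n \<Delta> x = foldl (\<lambda>y B. block_update \<alpha> n B y) x \<Delta>"

definition blk :: "nat set list \<Rightarrow> nat \<Rightarrow> nat" where
  "blk \<Delta> u = (THE a. a < length \<Delta> \<and> u \<in> \<Delta> ! a)"

datatype label = LPlus | LMinus

definition lab :: "nat set list \<Rightarrow> nat \<times> nat \<Rightarrow> label" where
  "lab \<Delta> e = (if blk \<Delta> (snd e) \<le> blk \<Delta> (fst e) then LPlus else LMinus)"

definition dleft :: "nat \<Rightarrow> nat set list \<Rightarrow> nat \<Rightarrow> nat" where
  "dleft n \<Delta> i = (GREATEST k. \<forall>j::nat. 0 < j \<and> j < k \<longrightarrow>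
      lab \<Delta> (cmod n (int i - int j), cmod n (int i - int j + 1)) = LMinus)"

definition dright :: "nat \<Rightarrow> nat set list \<Rightarrow> nat \<Rightarrow> nat" where
  "dright n \<Delta> i = (GREATEST k. \<forall>j::nat. 0 < j \<and> j < k \<longrightarrow>
      lab \<Delta> (cmod n (int i + int j), cmod n (int i + int j - 1)) = LMinus)"

end

theory Submission
  imports Defs
begin

definition St :: "nat \<Rightarrow> nat \<Rightarrow> nat set list \<Rightarrow> (nat \<Rightarrow> bool) \<Rightarrow> nat \<Rightarrow> (nat \<Rightarrow> bool)" where
  "St \<alpha> n \<Delta> x t = foldl (\<lambda>y B. block_update \<alpha> n B y) x (take t \<Delta>)"

lemma St_Suc: "t < length \<Delta> \<Longrightarrow> St \<alpha> n \<Delta> x (Suc t) = block_update \<alpha> n (\<Delta>!t) (St \<alpha> n \<Delta> x t)"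
  by (simp add: St_def take_Suc_conv_app_nth)

lemma blk_unique:
  assumes us: "update_schedule n \<Delta>" and a: "a < length \<Delta>" and c: "c \<in> \<Delta>!a"
  shows "blk \<Delta> c = a"
proof -
  have d: "\<forall>a < length \<Delta>. \<forall>b < length \<Delta>. a \<noteq> b \<longrightarrow> \<Delta> ! a \<inter> \<Delta> ! b = {}"
    using us unfolding update_schedule_def by simp
  have "\<And>b. b < length \<Delta> \<and> c \<in> \<Delta>!b \<Longrightarrow> b = a"
  proof (rule ccontr)
    fix b assume "b < length \<Delta> \<and> c \<in> \<Delta>!b" "b \<noteq> a"
    then have "\<Delta> ! b \<inter> \<Delta> ! a = {}" using d a by simp
    then show False using c \<open>b < length \<Delta> \<and> c \<in> \<Delta>!b\<close> by auto
  qed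
  then show ?thesis unfolding blk_def using a c by (metis (no_types, lifting) the_equality)
qed

lemma blk_props:
  assumes us: "update_schedule n \<Delta>" and c: "c < n"
  shows "blk \<Delta> c < length \<Delta> \<and> c \<in> \<Delta> ! blk \<Delta> c"
proof -
  have "c \<in> \<Union> (set \<Delta>)" using us c unfolding update_schedule_def by auto
  then obtain a where "a < length \<Delta>" "c \<in> \<Delta>!a" by (auto simp: in_set_conv_nth)
  then show ?thesis using blk_unique[OF us] by auto
qed

lemma St_formula:
  assumes us: "update_schedule n \<Delta>" and c: "c < n"
  shows "t \<le> length \<Delta> \<Longrightarrow> St \<alpha> n \<Delta> x t c = (if blk \<Delta> c < t then eca \<alpha> n (St \<alpha> n \<Delta> x (blk \<Delta> c)) c else x c)"
proof (induction t)
  case 0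
  then show ?case by (simp add: St_def)
next
  case (Suc t)
  have IH: "St \<alpha> n \<Delta> x t c = (if blk \<Delta> c < t then eca \<alpha> n (St \<alpha> n \<Delta> x (blk \<Delta> c)) c else x c)"
    using Suc by simp
  have tl: "t < length \<Delta>" using Suc by simp
  show ?case
  proof (cases "c \<in> \<Delta>!t")
    case True
    then have "blk \<Delta> c = t" using blk_unique[OF us tl] by simp
    then show ?thesis using True by (simp add: St_Suc[OF tl] block_update_def)
  next
    case False
    then have "blk \<Delta> c \<noteq> t" using blk_props[OF us c] by auto
    then show ?thesis using False IH by (simp add: St_Suc[OF tl] block_update_def)
  qed
qed

lemma async_St: "async_eca \<alpha> n \<Delta> x = St \<alpha> n \<Delta> x (length \<Delta>)"
  by (simp add: St_def async_eca_def)

lemma cmod_lt: "n \<ge> 1 \<Longrightarrow> cmod n k < n"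
  unfolding cmod_def by (simp add: nat_less_iff)

lemma cmod_shift: "n \<ge> 1 \<Longrightarrow> cmod n (int (cmod n k) + d) = cmod n (k + d)"
  unfolding cmod_def by (simp add: mod_add_left_eq)

lemma cmod_id: "i < n \<Longrightarrow> cmod n (int i) = i"
  unfolding cmod_def by simp

fun HL :: "nat \<Rightarrow> nat \<Rightarrow> (nat \<Rightarrow> bool) \<Rightarrow> nat \<Rightarrow> nat \<Rightarrow> bool" where
  "HL \<alpha> n x 0 c = x c"
| "HL \<alpha> n x (Suc m) c = rule \<alpha> (HL \<alpha> n x m (cmod n (int c - 1))) (x c) (x (cmod n (int c + 1)))"

fun HR :: "nat \<Rightarrow> nat \<Rightarrow> (nat \<Rightarrow> bool) \<Rightarrow> nat \<Rightarrow> nat \<Rightarrow> bool" where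
  "HR \<alpha> n x 0 c = x c"
| "HR \<alpha> n x (Suc m) c = rule \<alpha> (x (cmod n (int c - 1))) (x c) (HR \<alpha> n x m (cmod n (int c + 1)))"

lemma left_chain:
  assumes us: "update_schedule n \<Delta>" and n1: "n \<ge> 1"
  shows "(\<forall>j'. j \<le> j' \<and> j' < j + m \<longrightarrow> blk \<Delta> (cmod n (int i - int j')) < blk \<Delta> (cmod n (int i - int j' + 1)))
    \<Longrightarrow> blk \<Delta> (cmod n (int i - int (j+m) + 1)) \<le> blk \<Delta> (cmod n (int i - int (j+m)))
    \<Longrightarrow> St \<alpha> n \<Delta> x (blk \<Delta> (cmod n (int i - int j + 1))) (cmod n (int i - int j)) = HL \<alpha> n x m (cmod n (int i - int j))"
proof (induction m arbitrary: j)
  case 0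
  define c where "c = cmod n (int i - int j)"
  define p where "p = cmod n (int i - int j + 1)"
  have cn: "c < n" "p < n" unfolding c_def p_def using cmod_lt[OF n1] by auto
  have tl: "blk \<Delta> p \<le> length \<Delta>" using blk_props[OF us cn(2)] by simp
  have "blk \<Delta> p \<le> blk \<Delta> c" using 0 unfolding c_def p_def by simp
  then show ?case using St_formula[OF us cn(1) tl, of \<alpha> x] unfolding c_def[symmetric] p_def[symmetric] by simp
next
  case (Suc m)
  define c where "c = cmod n (int i - int j)"
  define p where "p = cmod n (int i - int j + 1)"
  define c' where "c' = cmod n (int i - int (Suc j))"
  have cn: "c < n" "p < n" "c' < n" unfolding c_def p_def c'_def using cmod_lt[OF n1] by auto
  have tl: "blk \<Delta> p \<le> length \<Delta>" using blk_props[OF us cn(2)] by simp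
  have tlc: "blk \<Delta> c \<le> length \<Delta>" using blk_props[OF us cn(1)] by simp
  have lt: "blk \<Delta> c < blk \<Delta> p" using Suc.prems(1) unfolding c_def p_def by auto
  have e1: "cmod n (int c - 1) = c'" unfolding c_def c'_def using cmod_shift[OF n1, of "int i - int j" "-1"] by (simp add: algebra_simps)
  have e2: "cmod n (int c + 1) = p" unfolding c_def p_def using cmod_shift[OF n1, of "int i - int j" "1"] by simp
  have e3: "cmod n (int i - int (Suc j) + 1) = c" unfolding c_def by (simp add: algebra_simps)
  have IH: "St \<alpha> n \<Delta> x (blk \<Delta> c) c' = HL \<alpha> n x m c'"
    using Suc.IH[of "Suc j"] Suc.prems unfolding e3 c'_def by auto
  have s1: "St \<alpha> n \<Delta> x (blk \<Delta> p) c = eca \<alpha> n (St \<alpha> n \<Delta> x (blk \<Delta> c)) c"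
    using St_formula[OF us cn(1) tl, of \<alpha> x] lt by simp
  have s2: "St \<alpha> n \<Delta> x (blk \<Delta> c) c = x c"
    using St_formula[OF us cn(1) tlc, of \<alpha> x] by simp
  have s3: "St \<alpha> n \<Delta> x (blk \<Delta> c) p = x p"
    using St_formula[OF us cn(2) tlc, of \<alpha> x] lt by simp
  show ?case unfolding c_def[symmetric] p_def[symmetric]
    using s1 s2 s3 IH e1 e2 by (simp add: eca_def)
qed


lemma right_chain:
  assumes us: "update_schedule n \<Delta>" and n1: "n \<ge> 1"
  shows "(\<forall>j'. j \<le> j' \<and> j' < j + m \<longrightarrow> blk \<Delta> (cmod n (int i + int j')) < blk \<Delta> (cmod n (int i + int j' - 1)))
    \<Longrightarrow> blk \<Delta> (cmod n (int i + int (j+m) - 1)) \<le> blk \<Delta> (cmod n (int i + int (j+m)))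
    \<Longrightarrow> St \<alpha> n \<Delta> x (blk \<Delta> (cmod n (int i + int j - 1))) (cmod n (int i + int j)) = HR \<alpha> n x m (cmod n (int i + int j))"
proof (induction m arbitrary: j)
  case 0
  define c where "c = cmod n (int i + int j)"
  define p where "p = cmod n (int i + int j - 1)"
  have cn: "c < n" "p < n" unfolding c_def p_def using cmod_lt[OF n1] by auto
  have tl: "blk \<Delta> p \<le> length \<Delta>" using blk_props[OF us cn(2)] by simp
  have "blk \<Delta> p \<le> blk \<Delta> c" using 0 unfolding c_def p_def by simp
  then show ?case using St_formula[OF us cn(1) tl, of \<alpha> x] unfolding c_def[symmetric] p_def[symmetric] by simp
next
  case (Suc m)
  define c where "c = cmod n (int i + int j)"
  define p where "p = cmod n (int i + int j - 1)"
  define c' where "c' = cmod n (int i + int (Suc j))"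
  have cn: "c < n" "p < n" "c' < n" unfolding c_def p_def c'_def using cmod_lt[OF n1] by auto
  have tl: "blk \<Delta> p \<le> length \<Delta>" using blk_props[OF us cn(2)] by simp
  have tlc: "blk \<Delta> c \<le> length \<Delta>" using blk_props[OF us cn(1)] by simp
  have lt: "blk \<Delta> c < blk \<Delta> p" using Suc.prems(1) unfolding c_def p_def by auto
  have e1: "cmod n (int c + 1) = c'" unfolding c_def c'_def using cmod_shift[OF n1, of "int i + int j" "1"] by (simp add: algebra_simps)
  have e2: "cmod n (int c - 1) = p" unfolding c_def p_def using cmod_shift[OF n1, of "int i + int j" "-1"] by (simp add: algebra_simps)
  have e3: "cmod n (int i + int (Suc j) - 1) = c" unfolding c_def by (simp add: algebra_simps)
  have IH: "St \<alpha> n \<Delta> x (blk \<Delta> c) c' = HR \<alpha> n x m c'"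
    using Suc.IH[of "Suc j"] Suc.prems unfolding e3 c'_def by auto
  have s1: "St \<alpha> n \<Delta> x (blk \<Delta> p) c = eca \<alpha> n (St \<alpha> n \<Delta> x (blk \<Delta> c)) c"
    using St_formula[OF us cn(1) tl, of \<alpha> x] lt by simp
  have s2: "St \<alpha> n \<Delta> x (blk \<Delta> c) c = x c"
    using St_formula[OF us cn(1) tlc, of \<alpha> x] by simp
  have s3: "St \<alpha> n \<Delta> x (blk \<Delta> c) p = x p"
    using St_formula[OF us cn(2) tlc, of \<alpha> x] lt by simp
  show ?case unfolding c_def[symmetric] p_def[symmetric]
    using s1 s2 s3 IH e1 e2 by (simp add: eca_def)
qed


lemma dleft_props:
  assumes us: "update_schedule n \<Delta>" and n1: "n \<ge> 1" and i: "i < n"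
  shows "dleft n \<Delta> i \<ge> 1
    \<and> (\<forall>j. 0 < j \<and> j < dleft n \<Delta> i \<longrightarrow> blk \<Delta> (cmod n (int i - int j)) < blk \<Delta> (cmod n (int i - int j + 1)))
    \<and> blk \<Delta> (cmod n (int i - int (dleft n \<Delta> i) + 1)) \<le> blk \<Delta> (cmod n (int i - int (dleft n \<Delta> i)))"
proof -
  define P where "P = (\<lambda>k. \<forall>j::nat. 0 < j \<and> j < k \<longrightarrow>
      lab \<Delta> (cmod n (int i - int j), cmod n (int i - int j + 1)) = LMinus)"
  have Pl: "P k \<longleftrightarrow> (\<forall>j. 0 < j \<and> j < k \<longrightarrow> blk \<Delta> (cmod n (int i - int j)) < blk \<Delta> (cmod n (int i - int j + 1)))" for k
    unfolding P_def lab_def by (auto simp: not_le split: if_splits)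
  have bound: "k \<le> n" if Pk: "P k" for k
  proof (rule ccontr)
    assume "\<not> k \<le> n"
    then have H: "\<And>j. 0 < j \<Longrightarrow> j \<le> n \<Longrightarrow> blk \<Delta> (cmod n (int i - int j)) < blk \<Delta> (cmod n (int i - int j + 1))"
      using Pk unfolding Pl by auto
    have "0 < j \<Longrightarrow> j \<le> n \<Longrightarrow> blk \<Delta> (cmod n (int i - int j)) < blk \<Delta> i" for j
    proof (induction j)
      case 0 then show ?case by simp
    next
      case (Suc j)
      have e: "cmod n (int i - int (Suc j) + 1) = cmod n (int i - int j)" by (simp add: algebra_simps)
      show ?case
      proof (cases "j = 0")
        case True
        then show ?thesis using H[of 1] n1 cmod_id[OF i] by simp
      next
        case False
        then show ?thesis using Suc H[of "Suc j"] e by simp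
      qed
    qed
    from this[of n] n1 show False using cmod_id[OF i] unfolding cmod_def by simp
  qed
  have P0: "P 0" unfolding P_def by simp
  have dl: "dleft n \<Delta> i = Greatest P" unfolding dleft_def P_def by simp
  have Pk: "P (dleft n \<Delta> i)" unfolding dl using GreatestI_nat[of P 0 n] P0 bound by blast
  have nP: "\<not> P (Suc (dleft n \<Delta> i))"
  proof
    assume "P (Suc (dleft n \<Delta> i))"
    then have "Suc (dleft n \<Delta> i) \<le> dleft n \<Delta> i" unfolding dl using Greatest_le_nat[of P _ n] bound by blast
    then show False by simp
  qed
  then obtain j where j: "0 < j" "j < Suc (dleft n \<Delta> i)"
    "\<not> blk \<Delta> (cmod n (int i - int j)) < blk \<Delta> (cmod n (int i - int j + 1))"
    unfolding Pl by auto
  have "j = dleft n \<Delta> i" using j Pk unfolding Pl by (metis less_SucE)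
  then show ?thesis using j Pk unfolding Pl by (auto simp: not_less)
qed

lemma dright_props:
  assumes us: "update_schedule n \<Delta>" and n1: "n \<ge> 1" and i: "i < n"
  shows "dright n \<Delta> i \<ge> 1
    \<and> (\<forall>j. 0 < j \<and> j < dright n \<Delta> i \<longrightarrow> blk \<Delta> (cmod n (int i + int j)) < blk \<Delta> (cmod n (int i + int j - 1)))
    \<and> blk \<Delta> (cmod n (int i + int (dright n \<Delta> i) - 1)) \<le> blk \<Delta> (cmod n (int i + int (dright n \<Delta> i)))"
proof -
  define P where "P = (\<lambda>k. \<forall>j::nat. 0 < j \<and> j < k \<longrightarrow>
      lab \<Delta> (cmod n (int i + int j), cmod n (int i + int j - 1)) = LMinus)"
  have Pl: "P k \<longleftrightarrow> (\<forall>j. 0 < j \<and> j < k \<longrightarrow> blk \<Delta> (cmod n (int i + int j)) < blk \<Delta> (cmod n (int i + int j - 1)))" for k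
    unfolding P_def lab_def by (auto simp: not_le split: if_splits)
  have bound: "k \<le> n" if Pk: "P k" for k
  proof (rule ccontr)
    assume "\<not> k \<le> n"
    then have H: "\<And>j. 0 < j \<Longrightarrow> j \<le> n \<Longrightarrow> blk \<Delta> (cmod n (int i + int j)) < blk \<Delta> (cmod n (int i + int j - 1))"
      using Pk unfolding Pl by auto
    have "0 < j \<Longrightarrow> j \<le> n \<Longrightarrow> blk \<Delta> (cmod n (int i + int j)) < blk \<Delta> i" for j
    proof (induction j)
      case 0 then show ?case by simp
    next
      case (Suc j)
      have e: "cmod n (int i + int (Suc j) - 1) = cmod n (int i + int j)" by (simp add: algebra_simps)
      show ?case
      proof (cases "j = 0")
        case True
        then show ?thesis using H[of 1] n1 cmod_id[OF i] by simp
      next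
        case False
        then show ?thesis using Suc H[of "Suc j"] e by simp
      qed
    qed
    from this[of n] n1 show False using cmod_id[OF i] unfolding cmod_def by simp
  qed
  have P0: "P 0" unfolding P_def by simp
  have dl: "dright n \<Delta> i = Greatest P" unfolding dright_def P_def by simp
  have Pk: "P (dright n \<Delta> i)" unfolding dl using GreatestI_nat[of P 0 n] P0 bound by blast
  have nP: "\<not> P (Suc (dright n \<Delta> i))"
  proof
    assume "P (Suc (dright n \<Delta> i))"
    then have "Suc (dright n \<Delta> i) \<le> dright n \<Delta> i" unfolding dl using Greatest_le_nat[of P _ n] bound by blast
    then show False by simp
  qed
  then obtain j where j: "0 < j" "j < Suc (dright n \<Delta> i)"
    "\<not> blk \<Delta> (cmod n (int i + int j)) < blk \<Delta> (cmod n (int i + int j - 1))"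
    unfolding Pl by auto
  have "j = dright n \<Delta> i" using j Pk unfolding Pl by (metis less_SucE)
  then show ?thesis using j Pk unfolding Pl by (auto simp: not_less)
qed


lemma final_value:
  assumes us: "update_schedule n \<Delta>" and n1: "n \<ge> 1" and i: "i < n"
  shows "async_eca \<alpha> n \<Delta> x i = rule \<alpha> (HL \<alpha> n x (dleft n \<Delta> i - 1) (cmod n (int i - 1))) (x i)
           (HR \<alpha> n x (dright n \<Delta> i - 1) (cmod n (int i + 1)))"
proof -
  have bi: "blk \<Delta> i < length \<Delta>" using blk_props[OF us i] by simp
  have a: "async_eca \<alpha> n \<Delta> x i = eca \<alpha> n (St \<alpha> n \<Delta> x (blk \<Delta> i)) i"
    unfolding async_St using St_formula[OF us i, of "length \<Delta>" \<alpha> x] bi by simp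
  have xi: "St \<alpha> n \<Delta> x (blk \<Delta> i) i = x i"
    using St_formula[OF us i, of "blk \<Delta> i" \<alpha> x] bi by simp
  define k where "k = dleft n \<Delta> i"
  have L: "k \<ge> 1" "\<forall>j. 0 < j \<and> j < k \<longrightarrow> blk \<Delta> (cmod n (int i - int j)) < blk \<Delta> (cmod n (int i - int j + 1))"
    "blk \<Delta> (cmod n (int i - int k + 1)) \<le> blk \<Delta> (cmod n (int i - int k))"
    using dleft_props[OF us n1 i] unfolding k_def by auto
  have "St \<alpha> n \<Delta> x (blk \<Delta> (cmod n (int i - int 1 + 1))) (cmod n (int i - int 1)) = HL \<alpha> n x (k - 1) (cmod n (int i - int 1))"
    apply (rule left_chain[OF us n1])
    using L by auto
  then have l: "St \<alpha> n \<Delta> x (blk \<Delta> i) (cmod n (int i - 1)) = HL \<alpha> n x (k - 1) (cmod n (int i - 1))"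
    using cmod_id[OF i] by simp
  define r where "r = dright n \<Delta> i"
  have R: "r \<ge> 1" "\<forall>j. 0 < j \<and> j < r \<longrightarrow> blk \<Delta> (cmod n (int i + int j)) < blk \<Delta> (cmod n (int i + int j - 1))"
    "blk \<Delta> (cmod n (int i + int r - 1)) \<le> blk \<Delta> (cmod n (int i + int r))"
    using dright_props[OF us n1 i] unfolding r_def by auto
  have "St \<alpha> n \<Delta> x (blk \<Delta> (cmod n (int i + int 1 - 1))) (cmod n (int i + int 1)) = HR \<alpha> n x (r - 1) (cmod n (int i + int 1))"
    apply (rule right_chain[OF us n1])
    using R by auto
  then have rr: "St \<alpha> n \<Delta> x (blk \<Delta> i) (cmod n (int i + 1)) = HR \<alpha> n x (r - 1) (cmod n (int i + 1))"
    using cmod_id[OF i] by simp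
  show ?thesis unfolding a eca_def xi l rr k_def r_def ..
qed

theorem mainTheorem10:
  fixes \<alpha> n i :: nat and \<Delta> \<Delta>' :: "nat set list" and x :: "nat \<Rightarrow> bool"
  assumes "\<alpha> \<le> 255" and "n \<ge> 1"
    and "update_schedule n \<Delta>" and "update_schedule n \<Delta>'"
    and "i < n"
    and "dleft n \<Delta> i = dleft n \<Delta>' i"
    and "dright n \<Delta> i = dright n \<Delta>' i"
  shows "async_eca \<alpha> n \<Delta> x i = async_eca \<alpha> n \<Delta>' x i"
  using final_value[OF assms(3,2,5)] final_value[OF assms(4,2,5)] assms(6,7) by simp

end
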